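(* Let $I\subset F$ be a two-sided ideal generated by a finite set of monomials $\{v_k\}\subset W$, let $d=\max_k\deg v_k$, and $A=F/I$. Let $w\in W\setminus I$, $\Delta=\deg w$, and $\varphi:A[-\Delta]\to A$ the graded right $A$-module homomorphism $1\mapsto w+I$. Then $K=\mathrm{Ker}\,\varphi$ is a finitely generated monomial right ideal (generated by cosets of monomials), and every element of a minimal monomial basis of $K$ has degree (in the grading of $A[-\Delta]$) at most $\Delta+d-1$.
   Context: $\mathbb K$ is a field, $F=\mathbb K\langle x_1,\dots,x_n\rangle$ the free associative algebra with standard grading, $W$ its set of monomials (words). $A[-\Delta]$ denotes $A$ with grading $A[-\Delta]_e=A_{e-\Delta}$, so an element $f$ of $A$ homogeneous of degree $e$ has degree $\Delta+e$ in $A[-\Delta]$. *)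

theory Defs
  imports Main
begin

text \<open>The free associative algebra F = K<x_1..x_n> over a field 'k, with the letters
  given by a finite type 'x. Elements of F are finitely supported functions from words
  ('x list) to 'k. The monomials (words) are W = UNIV :: 'x list set.\<close>

definition FF :: "('x list \<Rightarrow> 'k::field) set" where
  "FF = {f. finite {u. f u \<noteq> 0}}"

definition wmono :: "'x list \<Rightarrow> ('x list \<Rightarrow> 'k::field)" where
  "wmono u = (\<lambda>v. if v = u then 1 else 0)"

definition fmult :: "('x list \<Rightarrow> 'k::field) \<Rightarrow> ('x list \<Rightarrow> 'k) \<Rightarrow> ('x list \<Rightarrow> 'k)" where
  "fmult f g = (\<lambda>u. \<Sum>p\<in>{p. fst p @ snd p = u}. f (fst p) * g (snd p))"

definition is_subspace :: "('x list \<Rightarrow> 'k::field) set \<Rightarrow> bool" where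
  "is_subspace S \<longleftrightarrow> S \<subseteq> FF \<and> (\<lambda>u. 0) \<in> S \<and> (\<forall>f\<in>S. \<forall>g\<in>S. (\<lambda>u. f u + g u) \<in> S)
     \<and> (\<forall>c f. f \<in> S \<longrightarrow> (\<lambda>u. c * f u) \<in> S)"

definition two_sided_ideal :: "('x list \<Rightarrow> 'k::field) set \<Rightarrow> bool" where
  "two_sided_ideal S \<longleftrightarrow> is_subspace S \<and>
     (\<forall>f\<in>S. \<forall>g\<in>FF. fmult f g \<in> S \<and> fmult g f \<in> S)"

definition right_ideal :: "('x list \<Rightarrow> 'k::field) set \<Rightarrow> bool" where
  "right_ideal S \<longleftrightarrow> is_subspace S \<and> (\<forall>f\<in>S. \<forall>g\<in>FF. fmult f g \<in> S)"

definition ideal_gen :: "('x list \<Rightarrow> 'k::field) set \<Rightarrow> ('x list \<Rightarrow> 'k) set" where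
  "ideal_gen S = \<Inter>{J. two_sided_ideal J \<and> S \<subseteq> J}"

definition right_ideal_gen :: "('x list \<Rightarrow> 'k::field) set \<Rightarrow> ('x list \<Rightarrow> 'k) set" where
  "right_ideal_gen S = \<Inter>{J. right_ideal J \<and> S \<subseteq> J}"

text \<open>Right ideals of A = F/I are identified with right ideals of F containing I
  (their preimages). The kernel of phi : A[-Delta] -> A, a + I |-> w a + I,
  has preimage {f in F. w f in I}.\<close>
definition ker_phi :: "('x list \<Rightarrow> 'k::field) set \<Rightarrow> 'x list \<Rightarrow> ('x list \<Rightarrow> 'k) set" where
  "ker_phi I w = {f \<in> FF. fmult (wmono w) f \<in> I}"

text \<open>The right ideal of A generated by the cosets u + I (u \<in> U), given by its preimage in F.\<close>
definition quot_right_gen :: "('x list \<Rightarrow> 'k::field) set \<Rightarrow> 'x list set \<Rightarrow> ('x list \<Rightarrow> 'k) set" where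
  "quot_right_gen I U = right_ideal_gen (I \<union> wmono ` U)"

definition minimal_monomial_basis ::
  "('x list \<Rightarrow> 'k::field) set \<Rightarrow> ('x list \<Rightarrow> 'k) set \<Rightarrow> 'x list set \<Rightarrow> bool" where
  "minimal_monomial_basis I K U \<longleftrightarrow> K = quot_right_gen I U \<and>
     (\<forall>U'. U' \<subset> U \<longrightarrow> K \<noteq> quot_right_gen I U')"

end

theory Submission
  imports Defs
begin

definition spn :: "'x list set \<Rightarrow> ('x list \<Rightarrow> 'k::field) set" where
  "spn P = {f \<in> FF. \<forall>u. f u \<noteq> 0 \<longrightarrow> u \<in> P}"

definition subw :: "'x list set \<Rightarrow> 'x list set" where
  "subw V = {u. \<exists>v\<in>V. \<exists>a b. u = a@v@b}"

definition rgen :: "'x list set \<Rightarrow> 'x list set \<Rightarrow> 'x list set" where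
  "rgen P U = P \<union> {u. \<exists>u'\<in>U. \<exists>x. u = u'@x}"

lemma pairs_eq: "{p. fst p @ snd p = z} = (\<lambda>i. (take i z, drop i z)) ` {..length z}"
proof (rule set_eqI, rule iffI)
  fix p assume "p \<in> {p. fst p @ snd p = z}"
  then show "p \<in> (\<lambda>i. (take i z, drop i z)) ` {..length z}"
    by (intro image_eqI[where x="length (fst p)"]) auto
qed auto

lemma finite_pairs: "finite {p. fst p @ snd p = (z::'x list)}"
  unfolding pairs_eq by simp

lemma wmono_FF: "wmono u \<in> FF"
  unfolding FF_def wmono_def by simp

lemma fmult_FF:
  assumes "f \<in> FF" "g \<in> FF"
  shows "fmult f g \<in> FF"
proof -
  let ?A = "{u. f u \<noteq> 0}" and ?B = "{u. g u \<noteq> 0}"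
  have fin: "finite ((\<lambda>(a,b). a@b) ` (?A \<times> ?B))" using assms unfolding FF_def by simp
  have "{u. fmult f g u \<noteq> 0} \<subseteq> (\<lambda>(a,b). a@b) ` (?A \<times> ?B)"
  proof
    fix z assume "z \<in> {u. fmult f g u \<noteq> 0}"
    then have "(\<Sum>p\<in>{p. fst p @ snd p = z}. f (fst p) * g (snd p)) \<noteq> 0"
      unfolding fmult_def by simp
    then obtain p where "p \<in> {p. fst p @ snd p = z}" "f (fst p) * g (snd p) \<noteq> 0"
      by (meson sum.not_neutral_contains_not_neutral)
    then show "z \<in> (\<lambda>(a,b). a@b) ` (?A \<times> ?B)"
      by (intro image_eqI[where x=p]) (auto simp: case_prod_beta mem_Times_iff)
  qed
  then show ?thesis unfolding FF_def using finite_subset fin by blast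
qed

lemma fmult_wmono: "fmult (wmono a) (wmono b) = (wmono (a@b) :: 'x list \<Rightarrow> 'k::field)"
proof
  fix z :: "'x list"
  let ?S = "{p. fst p @ snd p = z}"
  have "fmult (wmono a) (wmono b) z = (\<Sum>p\<in>?S. if p = (a,b) then 1 else 0)"
    unfolding fmult_def wmono_def by (rule sum.cong) (auto simp: prod_eq_iff)
  also have "\<dots> = (if (a,b) \<in> ?S then 1 else 0)"
    using finite_pairs[of z] by simp
  also have "\<dots> = wmono (a@b) z" unfolding wmono_def by auto
  finally show "fmult (wmono a) (wmono b) z = wmono (a@b) z" .
qed

lemma fmult_wmono_left1: "fmult (wmono w) f (w@u) = f u"
proof -
  let ?S = "{p. fst p @ snd p = w@u}"
  have "fmult (wmono w) f (w@u) = (\<Sum>p\<in>?S. if p = (w,u) then f u else 0)"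
    unfolding fmult_def wmono_def by (rule sum.cong) (auto simp: prod_eq_iff)
  also have "\<dots> = f u"
    using finite_pairs[of "w@u"] by simp
  finally show ?thesis .
qed

lemma fmult_wmono_left2: "\<not> (\<exists>u. z = w@u) \<Longrightarrow> fmult (wmono w) f z = 0"
  unfolding fmult_def wmono_def by (intro sum.neutral) auto

lemma spn_wmono: "(wmono u :: 'x list \<Rightarrow> 'k::field) \<in> spn P \<longleftrightarrow> u \<in> P"
  unfolding spn_def wmono_def FF_def by auto

lemma spn_subspace: "is_subspace (spn P :: ('x list \<Rightarrow> 'k::field) set)"
proof -
  have z: "(\<lambda>u. 0) \<in> spn P" unfolding spn_def FF_def by simp
  have ad: "(\<lambda>u. f u + g u) \<in> spn P" if "f \<in> spn P" "g \<in> spn P" for f g :: "'x list \<Rightarrow> 'k"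
  proof -
    have "{u. f u + g u \<noteq> 0} \<subseteq> {u. f u \<noteq> 0} \<union> {u. g u \<noteq> 0}" by auto
    then have "(\<lambda>u. f u + g u) \<in> FF" using that unfolding spn_def FF_def by (auto intro: finite_subset)
    moreover have "\<forall>u. f u + g u \<noteq> 0 \<longrightarrow> u \<in> P"
      using that unfolding spn_def by (metis (mono_tags, lifting) add.left_neutral mem_Collect_eq)
    ultimately show ?thesis unfolding spn_def by blast
  qed
  have sc: "(\<lambda>u. cc * f u) \<in> spn P" if "f \<in> spn P" for f :: "'x list \<Rightarrow> 'k" and cc :: 'k
  proof -
    have "{u. cc * f u \<noteq> 0} \<subseteq> {u. f u \<noteq> 0}" by auto
    then have "(\<lambda>u. cc * f u) \<in> FF" using that unfolding spn_def FF_def by (auto intro: finite_subset)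
    moreover have "\<forall>u. cc * f u \<noteq> 0 \<longrightarrow> u \<in> P"
      using that unfolding spn_def by auto
    ultimately show ?thesis unfolding spn_def by blast
  qed
  have "spn P \<subseteq> FF" unfolding spn_def by blast
  then show ?thesis unfolding is_subspace_def using z ad sc by blast
qed

lemma subsp_add: "is_subspace S \<Longrightarrow> f \<in> S \<Longrightarrow> g \<in> S \<Longrightarrow> (\<lambda>u. f u + g u) \<in> S"
  unfolding is_subspace_def by blast

lemma subsp_smult: "is_subspace S \<Longrightarrow> f \<in> S \<Longrightarrow> (\<lambda>u. c * f u) \<in> S"
  unfolding is_subspace_def by blast

lemma subsp_zero: "is_subspace S \<Longrightarrow> (\<lambda>u. 0) \<in> S"
  unfolding is_subspace_def by blast

lemma sum_in_subspace:
  fixes J :: "('x list \<Rightarrow> 'k::field) set" and c :: "'x list \<Rightarrow> 'k"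
  assumes "is_subspace J" "finite S" "\<forall>u\<in>S. wmono u \<in> J"
  shows "(\<lambda>v. \<Sum>u\<in>S. c u * wmono u v) \<in> J"
  using assms(2,3)
proof (induction S rule: finite_induct)
  case empty
  then show ?case using subsp_zero[OF assms(1)] by simp
next
  case (insert x F)
  have 1: "(\<lambda>v. c x * wmono x v) \<in> J" using insert(4) subsp_smult[OF assms(1)] by simp
  have 2: "(\<lambda>v. \<Sum>u\<in>F. c u * wmono u v) \<in> J" using insert(3,4) by simp
  have 3: "(\<lambda>v. \<Sum>u\<in>insert x F. c u * wmono u v) = (\<lambda>v. c x * wmono x v + (\<Sum>u\<in>F. c u * wmono u v))"
    using insert(1,2) by simp
  show ?case unfolding 3 using subsp_add[OF assms(1) 1 2] by simp
qed

lemma spn_sub: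
  fixes J :: "('x list \<Rightarrow> 'k::field) set"
  assumes "is_subspace J" "\<forall>u\<in>P. wmono u \<in> J"
  shows "spn P \<subseteq> J"
proof
  fix f :: "'x list \<Rightarrow> 'k" assume f: "f \<in> spn P"
  let ?S = "{u. f u \<noteq> 0}"
  have fin: "finite ?S" using f unfolding spn_def FF_def by simp
  have "\<forall>u\<in>?S. wmono u \<in> J" using f assms(2) unfolding spn_def by blast
  then have mem: "(\<lambda>v. \<Sum>u\<in>?S. f u * wmono u v) \<in> J"
    by (rule sum_in_subspace[OF assms(1) fin])
  have eq: "(\<lambda>v. \<Sum>u\<in>?S. f u * wmono u v) = f"
  proof
    fix v
    have "(\<Sum>u\<in>?S. f u * wmono u v) = (\<Sum>u\<in>?S. if u = v then f v else 0)"
      unfolding wmono_def by (intro sum.cong refl) simp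
    also have "\<dots> = (if v \<in> ?S then f v else 0)" by (rule sum.delta[OF fin])
    also have "\<dots> = f v" by simp
    finally show "(\<Sum>u\<in>?S. f u * wmono u v) = f v" .
  qed
  from mem show "f \<in> J" unfolding eq .
qed

lemma spn_mult_right:
  assumes "\<forall>u\<in>P. \<forall>x. u@x \<in> P" "f \<in> spn P" "g \<in> FF"
  shows "fmult f g \<in> spn P"
proof -
  have "z \<in> P" if "fmult f g z \<noteq> 0" for z
  proof -
    from that obtain p where "p \<in> {p. fst p @ snd p = z}" "f (fst p) * g (snd p) \<noteq> 0"
      unfolding fmult_def by (meson sum.not_neutral_contains_not_neutral)
    then show ?thesis using assms unfolding spn_def by auto
  qed
  moreover have "fmult f g \<in> FF" using fmult_FF assms unfolding spn_def by blast
  ultimately show ?thesis unfolding spn_def by auto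
qed

lemma spn_mult_left:
  assumes "\<forall>u\<in>P. \<forall>x. x@u \<in> P" "f \<in> spn P" "g \<in> FF"
  shows "fmult g f \<in> spn P"
proof -
  have "z \<in> P" if "fmult g f z \<noteq> 0" for z
  proof -
    from that obtain p where "p \<in> {p. fst p @ snd p = z}" "g (fst p) * f (snd p) \<noteq> 0"
      unfolding fmult_def by (meson sum.not_neutral_contains_not_neutral)
    then show ?thesis using assms unfolding spn_def by auto
  qed
  moreover have "fmult g f \<in> FF" using fmult_FF assms unfolding spn_def by blast
  ultimately show ?thesis unfolding spn_def by auto
qed

lemma subw_right: "\<forall>u\<in>subw V. \<forall>x. u@x \<in> subw V"
proof (intro ballI allI)
  fix u x assume "u \<in> subw V"
  then obtain v a b where "v \<in> V" "u = a@v@b" unfolding subw_def by blast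
  then have "u@x = a@v@(b@x)" "v \<in> V" by simp_all
  then show "u@x \<in> subw V" unfolding subw_def by blast
qed

lemma subw_left: "\<forall>u\<in>subw V. \<forall>x. x@u \<in> subw V"
proof (intro ballI allI)
  fix u x assume "u \<in> subw V"
  then obtain v a b where "v \<in> V" "u = a@v@b" unfolding subw_def by blast
  then have "x@u = (x@a)@v@b" "v \<in> V" by simp_all
  then show "x@u \<in> subw V" unfolding subw_def by blast
qed

lemma ideal_gen_eq: "ideal_gen (wmono ` V) = (spn (subw V) :: ('x list \<Rightarrow> 'k::field) set)"
proof
  have "two_sided_ideal (spn (subw V) :: ('x list \<Rightarrow> 'k) set)"
    unfolding two_sided_ideal_def
  proof (intro conjI ballI)
    show "is_subspace (spn (subw V) :: ('x list \<Rightarrow> 'k) set)" by (rule spn_subspace)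
    fix f g :: "'x list \<Rightarrow> 'k" assume "f \<in> spn (subw V)" "g \<in> FF"
    then show "fmult f g \<in> spn (subw V)" "fmult g f \<in> spn (subw V)"
      using spn_mult_right[OF subw_right] spn_mult_left[OF subw_left] by auto
  qed
  moreover have "wmono ` V \<subseteq> (spn (subw V) :: ('x list \<Rightarrow> 'k) set)"
  proof
    fix y :: "'x list \<Rightarrow> 'k" assume "y \<in> wmono ` V"
    then obtain v where "v \<in> V" "y = wmono v" by auto
    have "v = []@v@[]" by simp
    then have vv: "v \<in> subw V" unfolding subw_def using \<open>v \<in> V\<close> by blast
    have "(wmono v :: 'x list \<Rightarrow> 'k) \<in> spn (subw V)" using vv spn_wmono by blast
    then show "y \<in> (spn (subw V) :: ('x list \<Rightarrow> 'k) set)" using \<open>y = wmono v\<close> by simp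
  qed
  ultimately show "ideal_gen (wmono ` V) \<subseteq> (spn (subw V) :: ('x list \<Rightarrow> 'k) set)"
    unfolding ideal_gen_def by (intro Inter_lower) simp
next
  show "spn (subw V) \<subseteq> (ideal_gen (wmono ` V) :: ('x list \<Rightarrow> 'k) set)"
    unfolding ideal_gen_def
  proof (rule Inter_greatest)
    fix J :: "('x list \<Rightarrow> 'k) set" assume "J \<in> {J. two_sided_ideal J \<and> wmono ` V \<subseteq> J}"
    then have J: "two_sided_ideal J" "wmono ` V \<subseteq> J" by auto
    have "wmono u \<in> J" if uu: "u \<in> subw V" for u
    proof -
      obtain v a b where v: "v \<in> V" "u = a@v@b" using uu unfolding subw_def by auto
      have "fmult (wmono a) (wmono v) \<in> J" using J v wmono_FF unfolding two_sided_ideal_def by blast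
      then have "wmono (a@v) \<in> J" by (simp add: fmult_wmono)
      then have "fmult (wmono (a@v)) (wmono b) \<in> J" using J wmono_FF unfolding two_sided_ideal_def by blast
      then show ?thesis using v by (simp add: fmult_wmono)
    qed
    moreover have "is_subspace J" using J(1) unfolding two_sided_ideal_def by simp
    ultimately show "spn (subw V) \<subseteq> J" using spn_sub by blast
  qed
qed

lemma rgen_right: "\<forall>u\<in>P. \<forall>x. u@x \<in> P \<Longrightarrow> \<forall>u\<in>rgen P U. \<forall>x. u@x \<in> rgen P U"
proof (intro ballI allI)
  fix u x assume a: "\<forall>u\<in>P. \<forall>x. u@x \<in> P" and u: "u \<in> rgen P U"
  show "u@x \<in> rgen P U"
  proof (cases "u \<in> P")
    case True then show ?thesis using a unfolding rgen_def by blast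
  next
    case False
    then obtain u' y where "u' \<in> U" "u = u'@y" using u unfolding rgen_def by blast
    then have "u' \<in> U" "u@x = u'@(y@x)" by simp_all
    then show ?thesis unfolding rgen_def by blast
  qed
qed

lemma quot_eq:
  fixes I :: "('x list \<Rightarrow> 'k::field) set"
  assumes "I = spn P" "\<forall>u\<in>P. \<forall>x. u@x \<in> P"
  shows "quot_right_gen I U = spn (rgen P U)"
proof
  have "right_ideal (spn (rgen P U) :: ('x list \<Rightarrow> 'k) set)"
    unfolding right_ideal_def
  proof (intro conjI ballI)
    show "is_subspace (spn (rgen P U) :: ('x list \<Rightarrow> 'k) set)" by (rule spn_subspace)
    fix f g :: "'x list \<Rightarrow> 'k" assume "f \<in> spn (rgen P U)" "g \<in> FF"
    then show "fmult f g \<in> spn (rgen P U)"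
      using spn_mult_right[OF rgen_right[OF assms(2)]] by auto
  qed
  moreover have "I \<subseteq> spn (rgen P U)" using assms(1) unfolding spn_def rgen_def by auto
  moreover have "wmono ` U \<subseteq> (spn (rgen P U) :: ('x list \<Rightarrow> 'k) set)"
  proof
    fix y :: "'x list \<Rightarrow> 'k" assume "y \<in> wmono ` U"
    then obtain v where "v \<in> U" "y = wmono v" by auto
    have "v = v@[]" by simp
    then have vv: "v \<in> rgen P U" unfolding rgen_def using \<open>v \<in> U\<close> by blast
    have "(wmono v :: 'x list \<Rightarrow> 'k) \<in> spn (rgen P U)" using vv spn_wmono by blast
    then show "y \<in> (spn (rgen P U) :: ('x list \<Rightarrow> 'k) set)" using \<open>y = wmono v\<close> by simp
  qed
  ultimately show "quot_right_gen I U \<subseteq> spn (rgen P U)"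
    unfolding quot_right_gen_def right_ideal_gen_def by (intro Inter_lower) simp
next
  show "spn (rgen P U) \<subseteq> quot_right_gen I U"
    unfolding quot_right_gen_def right_ideal_gen_def
  proof (rule Inter_greatest)
    fix J :: "('x list \<Rightarrow> 'k) set" assume "J \<in> {J. right_ideal J \<and> I \<union> wmono ` U \<subseteq> J}"
    then have J: "right_ideal J" "I \<subseteq> J" "wmono ` U \<subseteq> J" by auto
    have "wmono u \<in> J" if uu: "u \<in> rgen P U" for u
    proof (cases "u \<in> P")
      case True
      then show ?thesis using J assms(1) spn_wmono by blast
    next
      case False
      then obtain u' x where "u' \<in> U" "u = u'@x" using uu unfolding rgen_def by auto
      then have "wmono u' \<in> J" using J(3) by blast
      then have "fmult (wmono u') (wmono x) \<in> J" using J(1) wmono_FF unfolding right_ideal_def by blast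
      then show ?thesis using \<open>u = u'@x\<close> by (simp add: fmult_wmono)
    qed
    moreover have "is_subspace J" using J(1) unfolding right_ideal_def by simp
    ultimately show "spn (rgen P U) \<subseteq> J" using spn_sub by blast
  qed
qed

lemma ker_eq: "ker_phi (spn P) w = (spn {u. w@u \<in> P} :: ('x list \<Rightarrow> 'k::field) set)"
proof (rule set_eqI, rule iffI)
  fix f :: "'x list \<Rightarrow> 'k" assume "f \<in> ker_phi (spn P) w"
  then have f: "f \<in> FF" "fmult (wmono w) f \<in> spn P" unfolding ker_phi_def by blast+
  have "w@u \<in> P" if "f u \<noteq> 0" for u
  proof -
    have "fmult (wmono w) f (w@u) \<noteq> 0" using that by (simp add: fmult_wmono_left1)
    then show ?thesis using f(2) unfolding spn_def by blast
  qed
  then show "f \<in> spn {u. w@u \<in> P}" using f(1) unfolding spn_def by blast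
next
  fix f :: "'x list \<Rightarrow> 'k" assume f: "f \<in> spn {u. w@u \<in> P}"
  have FF: "f \<in> FF" using f unfolding spn_def by blast
  have "z \<in> P" if "fmult (wmono w) f z \<noteq> 0" for z
  proof -
    have "\<exists>u. z = w@u"
    proof (rule ccontr)
      assume "\<not> (\<exists>u. z = w@u)"
      then have "fmult (wmono w) f z = 0" by (rule fmult_wmono_left2)
      then show False using that by simp
    qed
    then obtain u where u: "z = w@u" by blast
    then have "f u \<noteq> 0" using that by (simp add: fmult_wmono_left1)
    then have "w@u \<in> P" using f unfolding spn_def by blast
    then show ?thesis using u by simp
  qed
  then have "fmult (wmono w) f \<in> spn P"
    using fmult_FF[OF wmono_FF FF] unfolding spn_def by blast
  then show "f \<in> ker_phi (spn P) w"
    using FF unfolding ker_phi_def by blast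
qed

lemma spn_inj: "(spn P :: ('x list \<Rightarrow> 'k::field) set) = spn Q \<Longrightarrow> P = Q"
proof -
  assume e: "(spn P :: ('x list \<Rightarrow> 'k::field) set) = spn Q"
  have "u \<in> P \<longleftrightarrow> u \<in> Q" for u
    using spn_wmono[where 'k='k, of u P] spn_wmono[where 'k='k, of u Q] e by simp
  then show ?thesis by blast
qed

lemma comb:
  assumes "w \<notin> subw V" "u \<notin> subw V" "w@u = a@v@b" "v \<in> V"
  shows "\<exists>t x. u = t@x \<and> length t < length v \<and> w@t \<in> subw V"
proof -
  have L: "length w + length u = length a + length v + length b"
    using arg_cong[OF assms(3), of length] by simp
  consider "length a + length v \<le> length w" | "length w \<le> length a"
    | "length a < length w" "length w < length a + length v" by linarith
  then show ?thesis
  proof cases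
    case 1
    have "take (length w) (w@u) = take (length w) (a@v@b)" using assms(3) by simp
    then have "w = a@v@take (length w - length a - length v) b"
      using 1 by (simp add: take_append)
    then have "w \<in> subw V" using assms(4) unfolding subw_def by blast
    then show ?thesis using assms(1) by blast
  next
    case 2
    have "drop (length w) (w@u) = drop (length w) (a@v@b)" using assms(3) by simp
    then have "u = drop (length w) a @ v @ b"
      using 2 by simp
    then have "u \<in> subw V" using assms(4) unfolding subw_def by blast
    then show ?thesis using assms(2) by blast
  next
    case 3
    define n where "n = length a + length v - length w"
    have "take (length a + length v) (w@u) = take (length a + length v) (a@v@b)" using assms(3) by simp
    then have e: "w @ take n u = a@v" using 3 unfolding n_def by (simp add: take_append)
    have "w @ take n u = a@v@[]" using e by simp
    then have "w @ take n u \<in> subw V" using assms(4) unfolding subw_def by blast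
    moreover have "length (take n u) < length v" using 3 unfolding n_def by simp
    moreover have "u = take n u @ drop n u" by simp
    ultimately show ?thesis by blast
  qed
qed

theorem mainTheorem14:
  fixes V :: "('x::finite) list set" and w :: "'x list"
    and I :: "('x list \<Rightarrow> 'k::field) set" and d :: nat and K :: "('x list \<Rightarrow> 'k) set"
  assumes "finite V" and "V \<noteq> {}"
    and I_def: "I = ideal_gen (wmono ` V)"
    and d_def: "d = Max (length ` V)"
    and "wmono w \<notin> I"
    and K_def: "K = ker_phi I w"
  shows "(\<exists>U. finite U \<and> K = quot_right_gen I U)
       \<and> (\<forall>U. minimal_monomial_basis I K U \<longrightarrow>
              (\<forall>u\<in>U. length w + length u \<le> length w + d - 1))"
proof -
  define Q where "Q = {u. w@u \<in> subw V}"
  have Ieq: "I = spn (subw V)" using I_def ideal_gen_eq by blast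
  have Keq: "K = spn Q" using K_def Ieq ker_eq unfolding Q_def by blast
  have wn: "w \<notin> subw V" using assms(5) Ieq spn_wmono by blast
  have vd: "\<forall>v\<in>V. length v \<le> d" using assms(1) d_def by simp
  have Qg: "\<And>U. quot_right_gen I U = spn (rgen (subw V) U)"
    using quot_eq[OF Ieq subw_right] by blast
  have key: "\<exists>t x. u = t@x \<and> length t < d \<and> t \<in> Q" if uQ: "u \<in> Q" and uN: "u \<notin> subw V" for u
  proof -
    obtain v a b where "v \<in> V" "w@u = a@v@b" using uQ unfolding Q_def subw_def by blast
    then obtain t x where "u = t@x" "length t < length v" "w@t \<in> subw V"
      using comb[OF wn uN] by blast
    moreover have "length t < d" using vd \<open>v \<in> V\<close> \<open>length t < length v\<close> by (meson less_le_trans)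
    ultimately show ?thesis unfolding Q_def by blast
  qed
  have Qcl: "\<forall>u\<in>Q. \<forall>x. u@x \<in> Q"
  proof (intro ballI allI)
    fix u x assume "u \<in> Q"
    then have "w@u \<in> subw V" unfolding Q_def by simp
    then have "(w@u)@x \<in> subw V" using subw_right by blast
    then show "u@x \<in> Q" unfolding Q_def by simp
  qed
  have Qsub: "u \<in> Q" if "u \<in> subw V" for u
  proof -
    have "w@u \<in> subw V" using that subw_left by blast
    then show ?thesis unfolding Q_def by simp
  qed
  have P1: "\<exists>U. finite U \<and> K = quot_right_gen I U"
  proof (intro exI conjI)
    define U0 where "U0 = {u. length u \<le> d \<and> u \<in> Q}"
    have "U0 \<subseteq> {xs. set xs \<subseteq> UNIV \<and> length xs \<le> d}" unfolding U0_def by auto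
    then show "finite U0" by (rule finite_subset) (rule finite_lists_length_le, simp)
    have "Q = rgen (subw V) U0"
    proof
      show "Q \<subseteq> rgen (subw V) U0"
      proof
        fix u assume u: "u \<in> Q"
        show "u \<in> rgen (subw V) U0"
        proof (cases "u \<in> subw V")
          case True then show ?thesis unfolding rgen_def by simp
        next
          case False
          then obtain t x where "u = t@x" "length t < d" "t \<in> Q" using key u by blast
          then have "t \<in> U0" unfolding U0_def by simp
          then show ?thesis using \<open>u = t@x\<close> unfolding rgen_def by blast
        qed
      qed
      show "rgen (subw V) U0 \<subseteq> Q"
      proof
        fix z assume "z \<in> rgen (subw V) U0"
        then consider "z \<in> subw V" | u' x where "u' \<in> U0" "z = u'@x" unfolding rgen_def by blast
        then show "z \<in> Q"
        proof cases
          case 1 then show ?thesis using Qsub by blast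
        next
          case (2 u' x)
          then have "u' \<in> Q" unfolding U0_def by blast
          then show ?thesis using Qcl 2 by blast
        qed
      qed
    qed
    then show "K = quot_right_gen I U0" using Keq Qg by simp
  qed
  have P2: "length u < d" if U: "minimal_monomial_basis I K U" and uU: "u \<in> U" for U u
  proof (rule ccontr)
    assume "\<not> length u < d"
    then have ud: "d \<le> length u" by simp
    have KU: "K = quot_right_gen I U" and minU: "\<forall>U'. U' \<subset> U \<longrightarrow> K \<noteq> quot_right_gen I U'"
      using U unfolding minimal_monomial_basis_def by auto
    have QU: "Q = rgen (subw V) U" using KU Keq Qg spn_inj[where 'k='k] by simp
    have "u = u@[]" by simp
    then have uQ: "u \<in> Q" unfolding QU rgen_def using uU by blast
    define U' where "U' = U - {u}"
    have red: "u \<in> subw V \<or> (\<exists>u'\<in>U'. \<exists>y. u = u'@y)"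
    proof (cases "u \<in> subw V")
      case False
      then obtain t x where tx: "u = t@x" "length t < d" "t \<in> Q" using key uQ by blast
      have "t \<notin> subw V" using False tx(1) subw_right by blast
      then obtain u' y where "u' \<in> U" "t = u'@y" using tx(3) QU unfolding rgen_def by auto
      moreover have "u' \<noteq> u" using tx ud \<open>t = u'@y\<close> by auto
      ultimately show ?thesis using tx(1) unfolding U'_def by auto
    qed simp
    have "rgen (subw V) U = rgen (subw V) U'"
    proof
      show "rgen (subw V) U' \<subseteq> rgen (subw V) U" unfolding rgen_def U'_def by auto
      show "rgen (subw V) U \<subseteq> rgen (subw V) U'"
      proof
        fix z assume "z \<in> rgen (subw V) U"
        then consider "z \<in> subw V" | u'' x where "u'' \<in> U" "z = u''@x" unfolding rgen_def by auto
        then show "z \<in> rgen (subw V) U'"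
        proof cases
          case 1 then show ?thesis unfolding rgen_def by simp
        next
          case (2 u'' x)
          show ?thesis
          proof (cases "u'' = u")
            case False then show ?thesis using 2 unfolding rgen_def U'_def by auto
          next
            case True
            from red show ?thesis
            proof
              assume "u \<in> subw V" then show ?thesis using 2 True subw_right unfolding rgen_def by blast
            next
              assume "\<exists>u'\<in>U'. \<exists>y. u = u'@y"
              then obtain u' y where "u' \<in> U'" "u = u'@y" by blast
              then show ?thesis using 2 True unfolding rgen_def by auto
            qed
          qed
        qed
      qed
    qed
    then have "K = quot_right_gen I U'" using KU Qg by simp
    moreover have "U' \<subset> U" using uU unfolding U'_def by auto
    ultimately show False using minU by blast
  qed
  show ?thesis using P1 P2 by fastforce
qed

end
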